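(* For all complex $y$, $$\sum_{n=0}^{\infty}\frac{C_n}{2^n}R_n(y)=e^{y}\left(1-I_0(y)+\sum_{n=0}^{\infty}\frac{y^{2n+1}}{4^n(n!)^2(2n+1)}\right)=e^{y}\left(1+(y-1)I_0(y)+\frac{\pi y}{2}\big[I_0(y)\mathbf{L}_1(y)-I_1(y)\mathbf{L}_0(y)\big]\right).$$
   Context: For an integer $n\ge 0$ and complex $y$, $R_n(y)=e^y-1-\frac{y}{1!}-\frac{y^2}{2!}-\dots-\frac{y^n}{n!}=e^y-\sum_{k=0}^n\frac{y^k}{k!}$. $C_n=\frac{1}{n+1}\binom{2n}{n}$ are the Catalan numbers. $I_0(z)=\sum_{n\ge0}\frac{z^{2n}}{4^n(n!)^2}$ and $I_1=I_0'$ are the modified Bessel functions of the first kind; $\mathbf{L}_0,\mathbf{L}_1$ are the modified Struve functions of orders $0$ and $1$. *)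

theory Defs
  imports "HOL-Analysis.Analysis"
begin

definition expRem :: "nat \<Rightarrow> complex \<Rightarrow> complex" where
  "expRem n y = exp y - (\<Sum>k\<le>n. y ^ k / of_nat (fact k))"

definition catalan :: "nat \<Rightarrow> nat" where
  "catalan n = ((2 * n) choose n) div (n + 1)"

definition besselI0 :: "complex \<Rightarrow> complex" where
  "besselI0 z = (\<Sum>n. z ^ (2 * n) / (4 ^ n * (of_nat (fact n))\<^sup>2))"

definition besselI1 :: "complex \<Rightarrow> complex" where
  "besselI1 z = (\<Sum>n. (z / 2) ^ (2 * n + 1) / (of_nat (fact n) * of_nat (fact (n + 1))))"

definition struveL0 :: "complex \<Rightarrow> complex" where
  "struveL0 z = (\<Sum>k. (z / 2) ^ (2 * k + 1) /
      (complex_of_real (Gamma (real k + 3 / 2)) * complex_of_real (Gamma (real k + 3 / 2))))"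

definition struveL1 :: "complex \<Rightarrow> complex" where
  "struveL1 z = (\<Sum>k. (z / 2) ^ (2 * k + 2) /
      (complex_of_real (Gamma (real k + 3 / 2)) * complex_of_real (Gamma (real k + 5 / 2))))"

end

theory Submission imports Defs "HOL-Analysis.FPS_Convergence" begin

definition ia :: "nat \<Rightarrow> complex" where "ia k = 1 / (4^k * (of_nat (fact k))^2)"

definition I0f :: "complex fps" where "I0f = Abs_fps (\<lambda>n. if even n then ia (n div 2) else 0)"
definition I1f :: "complex fps" where
  "I1f = Abs_fps (\<lambda>n. if odd n then 1 / (2^n * of_nat (fact (n div 2)) * of_nat (fact (Suc (n div 2)))) else 0)"
definition Sf :: "complex fps" where "Sf = Abs_fps (\<lambda>n. if odd n then ia (n div 2) / of_nat n else 0)"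
definition M0f :: "complex fps" where
  "M0f = Abs_fps (\<lambda>n. if odd n then 2^n * (of_nat (fact (n div 2)))^2 / (of_nat (fact n))^2 else 0)"
definition M1f :: "complex fps" where
  "M1f = Abs_fps (\<lambda>n. if even n \<and> n \<noteq> 0 then 4^(n div 2) * of_nat (fact (n div 2 - 1)) * of_nat (fact (n div 2))
        / (of_nat (fact (n - 1)) * of_nat (fact (n + 1))) else 0)"

lemma four_pow: "(4::complex)^k = 2^k * 2^k"
  by (metis power_mult_distrib numeral_times_numeral semiring_norm(12) semiring_norm(13))

lemma nz1 [simp]: "(1 + of_nat k :: complex) \<noteq> 0"
  by (metis of_nat_Suc of_nat_eq_0_iff nat.distinct(1) add.commute)
lemma nz2 [simp]: "(fact k + of_nat k * fact k :: complex) \<noteq> 0"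
proof -
  have "(fact k + of_nat k * fact k :: complex) = (1 + of_nat k) * fact k" by (simp add: algebra_simps)
  then show ?thesis by simp
qed

lemma nz3 [simp]: "(1 + 2 * of_nat k :: complex) \<noteq> 0"
  by (metis (mono_tags) add.commute nz1 of_nat_mult of_nat_numeral of_nat_add of_nat_1 of_nat_eq_0_iff add_is_0 one_neq_zero)

lemma parity_cases: fixes n :: nat obtains k where "n = 2*k" | k where "n = 2*k+1"
  by (metis oddE evenE)

lemma I0_deriv: "fps_deriv I0f = I1f"
proof (rule fps_ext)
  fix n show "fps_nth (fps_deriv I0f) n = fps_nth I1f n"
  proof (cases n rule: parity_cases)
    case (1 k) then show ?thesis by (simp add: I0f_def I1f_def)
  next
    case (2 k)
    have "Suc (Suc (2*k)) div 2 = Suc k" by simp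
    then show ?thesis using 2 apply (simp add: I0f_def I1f_def ia_def) apply (subst frac_eq_eq) apply simp apply simp apply (simp add: power_mult) apply (simp add: algebra_simps power2_eq_square) done
  qed
qed

lemma parity_cases3: fixes n :: nat obtains "n = 0" | k where "n = 2*k+1" | k where "n = 2*k+2"
  by (metis parity_cases add_2_eq_Suc' mult_0_right not0_implies_Suc mult_Suc_right add.commute)

lemma I1_rel: "fps_X * fps_deriv I1f = fps_X * I0f - I1f"
proof (rule fps_ext)
  fix n show "fps_nth (fps_X * fps_deriv I1f) n = fps_nth (fps_X * I0f - I1f) n"
  proof (cases n)
    case 0 then show ?thesis by (simp add: I0f_def I1f_def)
  next
    case (Suc m)
    then show ?thesis
    proof (cases m rule: parity_cases)
      case (1 k)
      have e: "Suc (2*k) div 2 = k" by simp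
      show ?thesis using Suc 1 apply (simp add: I0f_def I1f_def ia_def e del: fact_Suc of_nat_Suc of_nat_add of_nat_mult)
        apply (simp add: field_simps del: fact_Suc of_nat_Suc of_nat_add of_nat_mult)
        apply (simp add: fact_Suc power_mult four_pow algebra_simps power2_eq_square) done
    next
      case (2 k) then show ?thesis using Suc by (simp add: I0f_def I1f_def)
    qed
  qed
qed

lemma S_deriv: "fps_deriv Sf = I0f"
proof (rule fps_ext)
  fix n show "fps_nth (fps_deriv Sf) n = fps_nth I0f n"
  proof (cases n rule: parity_cases)
    case (1 k) then show ?thesis by (simp add: I0f_def Sf_def)
  next
    case (2 k) then show ?thesis by (simp add: I0f_def Sf_def del: of_nat_Suc of_nat_add of_nat_mult)
  qed
qed

lemma M0_deriv: "fps_deriv M0f = M1f + 2"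
proof (rule fps_ext)
  fix n show "fps_nth (fps_deriv M0f) n = fps_nth (M1f + 2) n"
  proof (cases n rule: parity_cases3)
    case 1 then show ?thesis by (simp add: M0f_def M1f_def fps_numeral_nth)
  next
    case (2 k) then show ?thesis by (simp add: M0f_def M1f_def fps_numeral_nth)
  next
    case (3 k)
    have e: "Suc (Suc (Suc (2*k))) div 2 = Suc k" "(2*k+2) div 2 = Suc k" by simp_all
    show ?thesis using 3 apply (simp add: M0f_def M1f_def fps_numeral_nth e del: fact_Suc of_nat_Suc of_nat_add of_nat_mult)
        apply (simp add: field_simps del: fact_Suc of_nat_Suc of_nat_add of_nat_mult)
        apply (simp add: fact_Suc power_mult four_pow algebra_simps power2_eq_square) done
  qed
qed

lemma M1_rel: "fps_X * fps_deriv M1f = fps_X * M0f - M1f"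
proof (rule fps_ext)
  fix n show "fps_nth (fps_X * fps_deriv M1f) n = fps_nth (fps_X * M0f - M1f) n"
  proof (cases n)
    case 0 then show ?thesis by (simp add: M0f_def M1f_def)
  next
    case (Suc m)
    then show ?thesis
    proof (cases m rule: parity_cases)
      case (1 k) then show ?thesis using Suc by (simp add: M0f_def M1f_def)
    next
      case (2 k)
      have e: "Suc (Suc (2*k)) div 2 = Suc k" "Suc (2*k) div 2 = k" by simp_all
      show ?thesis using Suc 2 apply (simp add: M0f_def M1f_def e del: fact_Suc of_nat_Suc of_nat_add of_nat_mult)
        apply (simp add: field_simps del: fact_Suc of_nat_Suc of_nat_add of_nat_mult)
        apply (simp add: fact_Suc power_mult four_pow algebra_simps power2_eq_square) done
    qed
  qed
qed

lemma Q_ode: "fps_X * fps_deriv (fps_deriv (I0f - I1f)) + 2 * fps_deriv (I0f - I1f) - fps_X * (I0f - I1f) + (I0f - I1f) = 0"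
proof -
  have h1: "fps_X * fps_deriv I1f = fps_X * I0f - I1f" by (rule I1_rel)
  have "fps_deriv (fps_X * fps_deriv I1f) = fps_deriv (fps_X * I0f - I1f)" using h1 by simp
  then have h2: "fps_deriv I1f + fps_X * fps_deriv (fps_deriv I1f) = I0f + fps_X * I1f - fps_deriv I1f"
    by (simp add: I0_deriv)
  show ?thesis using h1 h2 by (simp add: I0_deriv algebra_simps)
qed

definition Pf :: "complex fps" where "Pf = fps_exp 1 * (I0f - I1f)"

lemma P_ode: "fps_X * fps_deriv (fps_deriv Pf) + fps_deriv Pf + fps_deriv Pf = fps_X * fps_deriv Pf + fps_X * fps_deriv Pf + Pf"
proof -
  have h: "fps_X * fps_deriv (fps_deriv (I0f - I1f)) + 2 * fps_deriv (I0f - I1f) - fps_X * (I0f - I1f) + (I0f - I1f) = 0"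
    by (rule Q_ode)
  show ?thesis unfolding Pf_def using h by (simp add: algebra_simps) (algebra)
qed

lemma P_rec: "of_nat ((n+1)*(n+2)) * fps_nth Pf (Suc n) = of_nat (2*n+1) * fps_nth Pf n"
proof -
  have e: "fps_nth (fps_X * fps_deriv (fps_deriv Pf) + fps_deriv Pf + fps_deriv Pf) n
      = fps_nth (fps_X * fps_deriv Pf + fps_X * fps_deriv Pf + Pf) n"
    by (simp only: P_ode)
  show ?thesis
  proof (cases n)
    case 0 then show ?thesis using e by simp
  next
    case (Suc m) then show ?thesis using e by simp (simp add: algebra_simps)
  qed
qed

lemma aux1: fixes X B n :: nat assumes "Suc n * X = n * B" shows "B = Suc n * (B - X)"
proof -
  have "Suc n * X \<le> Suc n * B" using assms by simp
  then have xb: "X \<le> B" by (simp only: Suc_mult_le_cancel1)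
  have "Suc n * (B - X) = Suc n * B - Suc n * X" by (simp add: diff_mult_distrib2)
  also have "\<dots> = Suc n * B - n * B" using assms by simp
  also have "\<dots> = B" by (simp add: diff_mult_distrib[symmetric])
  finally show ?thesis by simp
qed

lemma catalan_mult: "catalan n * (n+1) = (2*n) choose n"
proof (cases n)
  case 0 then show ?thesis by (simp add: catalan_def)
next
  case (Suc m)
  have a: "Suc n * (Suc (n + m) choose Suc n) = Suc m * (Suc (n + m) choose n)"
    by (rule Suc_times_binomial_add)
  have e: "Suc (n+m) = 2*n" "Suc m = n" using Suc by simp_all
  have b: "Suc n * (2*n choose Suc n) = n * (2*n choose n)" using a by (simp only: e)
  have "(2*n choose n) = Suc n * ((2*n choose n) - (2*n choose Suc n))"
    by (rule aux1[OF b])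
  then have "(n+1) dvd (2*n choose n)" by (metis dvd_triv_left Suc_eq_plus1)
  then show ?thesis by (metis catalan_def dvd_div_mult_self Suc_eq_plus1)
qed

lemma aux2: fixes A B C n :: nat
  assumes h1: "Suc n * A = Suc (Suc (2*n)) * C" and h2: "Suc (2*n) * B = C * Suc n"
  shows "(n+1) * A = 2*(2*n+1) * B"
proof -
  have "Suc n * A = 2 * (C * Suc n)" using h1 by (simp add: algebra_simps)
  then show ?thesis using h2 by (simp add: algebra_simps)
qed

lemma central_binom_rec: "(n+1) * (Suc (Suc (2*n)) choose Suc n) = 2*(2*n+1) * ((2*n) choose n)"
proof -
  have a: "Suc n * (Suc (Suc (2*n)) choose Suc n) = Suc (Suc (2*n)) * (Suc (2*n) choose n)"
    by (rule Suc_times_binomial)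
  have b: "Suc (2*n) * ((2*n) choose n) = (Suc (2*n) choose Suc n) * Suc n"
    by (rule Suc_times_binomial_eq)
  have le: "n \<le> Suc (2*n)" by simp
  have d: "Suc (2*n) - n = Suc n" by simp
  from binomial_symmetric[OF le] have s: "(Suc (2*n) choose n) = (Suc (2*n) choose Suc n)" unfolding d .
  have b': "Suc (2*n) * ((2*n) choose n) = (Suc (2*n) choose n) * Suc n" using b by (simp only: s)
  show ?thesis by (rule aux2[OF a b'])
qed

lemma aux3: fixes Cs c A B n :: nat
  assumes h1: "Cs * (n+2) = A" and h2: "c * (n+1) = B" and h3: "(n+1) * A = 2*(2*n+1) * B"
  shows "Cs * (n+2) = 2*(2*n+1) * c"
proof -
  have "(n+1) * (Cs * (n+2)) = (n+1) * A" using h1 by simp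
  also have "\<dots> = 2*(2*n+1) * B" by (rule h3)
  also have "\<dots> = (n+1) * (2*(2*n+1) * c)" unfolding h2[symmetric] by (simp add: algebra_simps)
  finally have eq: "(n+1) * (Cs * (n+2)) = (n+1) * (2*(2*n+1) * c)" .
  have nz: "(n+1::nat) \<noteq> 0" by simp
  show ?thesis using iffD1[OF mult_left_cancel[OF nz] eq] .
qed

lemma catalan_rec: "catalan (Suc n) * (n+2) = 2*(2*n+1) * catalan n"
proof -
  have e: "Suc n + 1 = n+2" "2 * Suc n = Suc (Suc (2*n))" by simp_all
  have h: "catalan (Suc n) * (n+2) = Suc (Suc (2*n)) choose Suc n"
    using catalan_mult[of "Suc n"] by (simp only: e)
  show ?thesis by (rule aux3[OF h catalan_mult[of n] central_binom_rec[of n]])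
qed


definition cc :: "nat \<Rightarrow> complex" where "cc n = of_nat (catalan n) / 2^n"

lemma P_eq: "fps_nth Pf n = cc n / fact n"
proof (induction n)
  case 0
  have "fps_nth Pf 0 = 1" by (simp add: Pf_def I0f_def I1f_def ia_def)
  then show ?case by (simp add: cc_def catalan_def)
next
  case (Suc n)
  have r: "of_nat ((n+1)*(n+2)) * fps_nth Pf (Suc n) = of_nat (2*n+1) * fps_nth Pf n" by (rule P_rec)
  have c: "of_nat (catalan (Suc n)) * of_nat (n+2) = (of_nat (2*(2*n+1) * catalan n) :: complex)"
    using catalan_rec[of n] by (metis of_nat_mult)
  have nz: "(of_nat ((n+1)*(n+2)) :: complex) \<noteq> 0" by (simp only: of_nat_eq_0_iff) simp
  have "fps_nth Pf (Suc n) = of_nat (2*n+1) * (cc n / fact n) / of_nat ((n+1)*(n+2))"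
    using r nz Suc.IH by (metis nonzero_mult_div_cancel_left)
  also have "\<dots> = cc (Suc n) / fact (Suc n)"
    using c unfolding cc_def
    by (simp add: field_simps del: of_nat_Suc of_nat_add of_nat_mult fact_Suc)
       (simp add: fact_Suc algebra_simps, algebra)
  finally show ?case .
qed

definition Gf :: "complex fps" where "Gf = 1 - I0f + Sf"

lemma G_deriv: "fps_deriv Gf = I0f - I1f"
  by (simp add: Gf_def I0_deriv S_deriv)

definition aa :: "nat \<Rightarrow> complex" where "aa k = (\<Sum>n<k. cc n)"
definition Af :: "complex fps" where "Af = Abs_fps (\<lambda>k. aa k / fact k)"

lemma A_deriv: "fps_deriv Af = Af + Pf"
proof (rule fps_ext)
  fix n
  show "fps_nth (fps_deriv Af) n = fps_nth (Af + Pf) n"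
    by (simp add: Af_def P_eq aa_def field_simps del: of_nat_Suc of_nat_add fact_Suc)
       (simp add: fact_Suc algebra_simps)
qed

lemma A_eq: "Af = fps_exp 1 * Gf"
proof -
  define D where "D = Af - fps_exp 1 * Gf"
  have dd: "fps_deriv D = D"
    unfolding D_def using A_deriv by (simp add: G_deriv Pf_def algebra_simps)
  have d0: "fps_nth D 0 = 0"
    by (simp add: D_def Af_def aa_def Gf_def I0f_def Sf_def ia_def)
  have "fps_nth D n = 0" for n
  proof (induction n)
    case 0 then show ?case by (rule d0)
  next
    case (Suc n)
    have "fps_nth (fps_deriv D) n = fps_nth D n" by (simp only: dd)
    then have "of_nat (Suc n) * fps_nth D (Suc n) = 0" using Suc.IH by simp
    then show ?case by (simp del: of_nat_Suc)
  qed
  then have "D = 0" by (intro fps_ext) simp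
  then show ?thesis by (simp add: D_def)
qed

definition Tf :: "complex fps" where
  "Tf = fps_X * I0f + fps_const (1/2) * (fps_X * (I0f * M1f - I1f * M0f))"

lemma T_eq: "Sf = Tf"
proof -
  have h1: "fps_X * fps_deriv I1f = fps_X * I0f - I1f" by (rule I1_rel)
  have h2: "fps_X * fps_deriv M1f = fps_X * M0f - M1f" by (rule M1_rel)
  have h3: "fps_const (1/2) * 2 = (1::complex fps)"
    by (simp add: fps_numeral_fps_const fps_const_mult[symmetric] del: fps_const_mult)
  have "fps_deriv Tf = I0f"
    unfolding Tf_def apply (simp add: I0_deriv M0_deriv algebra_simps) apply (insert h1 h2 h3) by algebra
  then have "fps_deriv Sf = fps_deriv Tf" by (simp add: S_deriv)
  moreover have "fps_nth Sf 0 = fps_nth Tf 0" by (simp add: Sf_def Tf_def)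
  ultimately show ?thesis by (simp add: fps_deriv_eq_iff)
qed


lemma rad_inf:
  fixes f :: "complex fps" and K B :: real
  assumes "\<And>n. norm (fps_nth f n) \<le> K * B^n / fact n"
  shows "fps_conv_radius f = \<infinity>"
  unfolding fps_conv_radius_def
proof (rule conv_radius_inftyI'')
  fix z :: complex
  have s: "summable (\<lambda>n. K * (inverse (fact n) * (B * norm z)^n))"
    by (intro summable_mult summable_exp)
  show "summable (\<lambda>n. fps_nth f n * z^n)"
  proof (rule summable_norm_cancel, rule summable_comparison_test[OF _ s], intro exI allI impI)
    fix n :: nat
    have "norm (norm (fps_nth f n * z^n)) = norm (fps_nth f n) * norm z ^ n"
      by (simp add: norm_mult norm_power)
    also have "\<dots> \<le> K * B^n / fact n * norm z ^ n"
      by (rule mult_right_mono[OF assms]) simp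
    also have "\<dots> = K * (inverse (fact n) * (B * norm z)^n)" by (simp add: power_mult_distrib field_simps)
    finally show "norm (norm (fps_nth f n * z^n)) \<le> K * (inverse (fact n) * (B * norm z)^n)" .
  qed
qed

lemma factL1: assumes "k \<le> n" shows "fact n \<le> 2^n * (fact k * fact (n-k) :: nat)"
proof -
  have "fact n = fact k * fact (n - k) * (n choose k)" using binomial_fact_lemma[OF assms] by simp
  also have "\<dots> \<le> fact k * fact (n - k) * 2^n" by (intro mult_left_mono binomial_le_pow2) simp
  finally show ?thesis by (simp add: mult.commute)
qed

lemma factL2: assumes "k \<le> n" shows "fact k * fact (n-k) \<le> (fact n :: nat)"
proof -
  have "fact n = fact k * fact (n - k) * (n choose k)" using binomial_fact_lemma[OF assms] by simp
  moreover have "n choose k \<ge> 1" using assms by (simp add: Suc_leI)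
  ultimately show ?thesis by (metis mult.right_neutral mult_le_mono2)
qed


lemma ia_bound: "norm (ia k) \<le> 1 / fact (2*k)"
proof -
  have "real (fact (2*k)) \<le> real (2^(2*k) * (fact k * fact (2*k-k)))"
    by (rule of_nat_mono, rule factL1) simp
  hence h: "fact (2*k) \<le> (4::real)^k * (fact k)^2" by (simp add: power_mult power2_eq_square)
  have "norm (ia k) = 1/(4^k * (fact k)^2)" by (simp add: ia_def norm_divide norm_mult norm_power)
  also have "\<dots> \<le> 1/fact (2*k)" using h by (intro divide_left_mono mult_pos_pos) auto
  finally show ?thesis .
qed

lemma bI0: "norm (fps_nth I0f n) \<le> 1 * 2^n / fact n"
proof (cases n rule: parity_cases)
  case (1 k)
  have "norm (fps_nth I0f n) \<le> 1 / fact n" using 1 ia_bound[of k] by (simp add: I0f_def)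
  also have "\<dots> \<le> 1 * 2^n / fact n" by (intro divide_right_mono) simp_all
  finally show ?thesis .
qed (simp add: I0f_def)

lemma bS: "norm (fps_nth Sf n) \<le> 1 * 2^n / fact n"
proof (cases n rule: parity_cases)
  case (2 k)
  have "norm (fps_nth Sf n) = norm (ia k) / real (Suc (2*k))" using 2
    by (simp add: Sf_def norm_divide del: of_nat_add of_nat_mult of_nat_Suc)
  also have "\<dots> \<le> (1 / fact (2*k)) / real (Suc (2*k))" by (intro divide_right_mono ia_bound) simp
  also have "\<dots> = 1 / fact n" using 2 by (simp add: fact_Suc field_simps)
  also have "\<dots> \<le> 1 * 2^n / fact n" by (intro divide_right_mono) simp_all
  finally show ?thesis .
qed (simp add: Sf_def)

lemma bI1: "norm (fps_nth I1f n) \<le> 1 * 1^n / fact n"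
proof (cases n rule: parity_cases)
  case (2 k)
  have d: "2*k+1-k = Suc k" by simp
  have "k \<le> 2*k+1" by simp
  from factL1[OF this] have hn: "fact (2*k+1) \<le> 2^(2*k+1) * (fact k * fact (Suc k) :: nat)" unfolding d .
  have "real (fact (2*k+1)) \<le> real (2^(2*k+1) * (fact k * fact (Suc k)))" using hn by (rule of_nat_mono)
  hence h: "fact n \<le> (2::real)^n * (fact k * fact (Suc k))"
    unfolding of_nat_mult of_nat_fact of_nat_power 2 by (simp del: fact_Suc)
  have "norm (fps_nth I1f n) = 1 / (2^n * fact k * fact (Suc k))" using 2
    by (simp add: I1f_def norm_divide norm_mult norm_power del: fact_Suc)
  also have "\<dots> \<le> 1 / fact n" using h by (intro divide_left_mono mult_pos_pos) (auto simp: mult.assoc)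
  finally show ?thesis by simp
qed (simp add: I1f_def)

lemma bM0: "norm (fps_nth M0f n) \<le> 1 * 2^n / fact n"
proof (cases n rule: parity_cases)
  case (2 k)
  have d: "2*k+1-k = Suc k" by simp
  have "k \<le> 2*k+1" by simp
  from factL2[OF this] have hn: "fact k * fact (Suc k) \<le> (fact (2*k+1) :: nat)" unfolding d .
  have "real (fact k * fact (Suc k)) \<le> real (fact (2*k+1))" using hn by (rule of_nat_mono)
  hence h1: "fact k * fact (Suc k) \<le> (fact n :: real)"
    unfolding of_nat_mult of_nat_fact 2 by (simp del: fact_Suc)
  have "(fact k :: real) \<le> fact (Suc k)" by (rule fact_mono) simp
  hence h: "(fact k)^2 \<le> (fact n :: real)" using h1
    by (metis (no_types) order_trans power2_eq_square mult_left_mono fact_ge_zero)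
  have "norm (fps_nth M0f n) = 2^n * (fact k)^2 / (fact n)^2" using 2
    by (simp add: M0f_def norm_divide norm_mult norm_power del: fact_Suc)
  also have "\<dots> \<le> 2^n * fact n / (fact n)^2"
    by (intro divide_right_mono mult_left_mono h) simp_all
  also have "\<dots> = 1 * 2^n / fact n" by (simp add: power2_eq_square)
  finally show ?thesis .
qed (simp add: M0f_def)

lemma bM1: "norm (fps_nth M1f n) \<le> 1 * 2^n / fact n"
proof (cases n rule: parity_cases3)
  case (3 k)
  have d: "2*k+1-k = Suc k" by simp
  have "k \<le> 2*k+1" by simp
  from factL2[OF this] have hn: "fact k * fact (Suc k) \<le> (fact (2*k+1) :: nat)" unfolding d .
  have "real (fact k * fact (Suc k)) \<le> real (fact (2*k+1))" using hn by (rule of_nat_mono)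
  hence h1: "fact k * fact (Suc k) \<le> (fact (2*k+1) :: real)"
    unfolding of_nat_mult of_nat_fact by (simp del: fact_Suc)
  have h2: "(fact (Suc (Suc (2*k))) :: real) \<le> fact (Suc (Suc (Suc (2*k))))" by (rule fact_mono) simp
  have h: "fact k * fact (Suc k) * fact (Suc (Suc (2*k))) \<le> (fact (2*k+1) * fact (Suc (Suc (Suc (2*k)))) :: real)"
    by (intro mult_mono h1 h2) simp_all
  have e: "n div 2 - 1 = k" "n div 2 = Suc k" "n - 1 = 2*k+1" "n + 1 = Suc (Suc (Suc (2*k)))" using 3 by simp_all
  have "norm (fps_nth M1f n) = 4^(Suc k) * fact k * fact (Suc k) / (fact (2*k+1) * fact (Suc (Suc (Suc (2*k)))))"
    using 3 unfolding M1f_def fps_nth_Abs_fps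
    by (simp only: e if_True) (simp add: norm_divide norm_mult norm_power del: fact_Suc)
  also have "\<dots> \<le> 4^(Suc k) / fact (Suc (Suc (2*k)))"
    using h by (simp add: divide_simps)
  also have "\<dots> = 1 * 2^n / fact n" using 3 by (simp add: power_mult)
  finally show ?thesis .
qed (simp_all add: M1f_def)

lemma rI0: "fps_conv_radius I0f = \<infinity>" by (rule rad_inf[OF bI0])
lemma rI1: "fps_conv_radius I1f = \<infinity>" by (rule rad_inf[OF bI1])
lemma rS: "fps_conv_radius Sf = \<infinity>" by (rule rad_inf[OF bS])
lemma rM0: "fps_conv_radius M0f = \<infinity>" by (rule rad_inf[OF bM0])
lemma rM1: "fps_conv_radius M1f = \<infinity>" by (rule rad_inf[OF bM1])


lemma reidx:
  fixes F :: "complex fps" and g :: "nat \<Rightarrow> nat"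
  assumes "strict_mono g" "\<And>n. n \<notin> range g \<Longrightarrow> fps_nth F n = 0" "fps_conv_radius F = \<infinity>"
  shows "(\<lambda>k. fps_nth F (g k) * y ^ (g k)) sums eval_fps F y"
proof -
  have "(\<lambda>n. fps_nth F n * y^n) sums eval_fps F y" using assms(3) by (intro sums_eval_fps) simp
  then show ?thesis using sums_mono_reindex[of g "\<lambda>n. fps_nth F n * y^n"] assms(1,2) by simp
qed

lemma even_range: "(n::nat) \<notin> range (\<lambda>k. 2*k) \<Longrightarrow> odd n" by (metis evenE rangeI)
lemma odd_range: "(n::nat) \<notin> range (\<lambda>k. 2*k+1) \<Longrightarrow> even n" by (metis oddE rangeI)
lemma even2_range: "(n::nat) \<notin> range (\<lambda>k. 2*k+2) \<Longrightarrow> odd n \<or> n = 0"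
proof -
  assume a: "n \<notin> range (\<lambda>k. 2*k+2)"
  show ?thesis
  proof (cases n rule: parity_cases3)
    case (3 k) then show ?thesis using a by auto
  qed auto
qed

lemma sm1: "strict_mono (\<lambda>k::nat. 2*k)" by (auto simp: strict_mono_def)
lemma sm2: "strict_mono (\<lambda>k::nat. 2*k+1)" by (auto simp: strict_mono_def)
lemma sm3: "strict_mono (\<lambda>k::nat. 2*k+2)" by (auto simp: strict_mono_def)

lemma evI0: "besselI0 y = eval_fps I0f y"
proof -
  have "(\<lambda>k. fps_nth I0f (2*k) * y^(2*k)) sums eval_fps I0f y"
    by (rule reidx[OF sm1 _ rI0]) (auto simp: I0f_def dest: even_range)
  moreover have "(\<lambda>k. fps_nth I0f (2*k) * y^(2*k)) = (\<lambda>k. y^(2*k) / (4^k * (of_nat (fact k))\<^sup>2))"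
    by (simp add: I0f_def ia_def)
  ultimately show ?thesis by (simp add: besselI0_def sums_iff)
qed

lemma evI1: "besselI1 y = eval_fps I1f y"
proof -
  have "(\<lambda>k. fps_nth I1f (2*k+1) * y^(2*k+1)) sums eval_fps I1f y"
    apply (rule reidx[OF sm2 _ rI1]) apply (drule odd_range) by (simp add: I1f_def)
  moreover have "(\<lambda>k. fps_nth I1f (2*k+1) * y^(2*k+1)) = (\<lambda>k. (y / 2) ^ (2 * k + 1) / (of_nat (fact k) * of_nat (fact (k + 1))))"
    by (rule ext) (simp add: I1f_def power_divide del: fact_Suc)
  ultimately show ?thesis by (simp add: besselI1_def sums_iff)
qed

lemma evS: "(\<lambda>n. y ^ (2 * n + 1) / (4 ^ n * (of_nat (fact n))\<^sup>2 * of_nat (2 * n + 1))) sums eval_fps Sf y"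
proof -
  have "(\<lambda>k. fps_nth Sf (2*k+1) * y^(2*k+1)) sums eval_fps Sf y"
    apply (rule reidx[OF sm2 _ rS]) apply (drule odd_range) by (simp add: Sf_def)
  moreover have "(\<lambda>k. fps_nth Sf (2*k+1) * y^(2*k+1)) = (\<lambda>n. y ^ (2 * n + 1) / (4 ^ n * (of_nat (fact n))\<^sup>2 * of_nat (2 * n + 1)))"
    by (rule ext) (simp add: Sf_def ia_def del: of_nat_add of_nat_mult of_nat_Suc)
  ultimately show ?thesis by simp
qed


lemma gstep:
  fixes x s F P fk :: real
  assumes "x + 1 \<noteq> 0" "P \<noteq> 0" "fk \<noteq> 0"
  shows "(x + 3/2) * (s * F / (P * fk)) = s * ((2*x+3)*(2*x+2)*F) / ((4*P) * ((x+1) * fk))"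
proof -
  have d: "(4*P) * ((x+1) * fk) \<noteq> 0" using assms by simp
  show ?thesis apply (rule eq_divide_imp[OF d]) using assms by (simp add: field_simps)
qed

lemma four_pow2: "(4::complex)^k = 2^(k*2)" by (simp add: mult.commute[of k 2] power_mult)

lemma Gamma_half: "Gamma (real k + 3/2) = sqrt pi * fact (2*k+1) / (2^(2*k+1) * fact k)"
proof (induction k)
  case 0
  have nz: "(1/2::real) \<notin> \<int>\<^sub>\<le>\<^sub>0" using nonpos_Ints_nonpos by fastforce
  have "Gamma (1/2 + 1) = 1/2 * Gamma (1/2::real)" by (rule Gamma_plus1[OF nz])
  moreover have "real 0 + 3/2 = 1/2 + (1::real)" by simp
  ultimately show ?case by (simp add: Gamma_one_half_real)
next
  case (Suc k)
  have nz: "(real k + 3/2) \<notin> \<int>\<^sub>\<le>\<^sub>0" using nonpos_Ints_nonpos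
    by (metis add_nonneg_pos not_le of_nat_0_le_iff zero_less_divide_iff zero_less_numeral)
  have "Gamma (real k + 3/2 + 1) = (real k + 3/2) * Gamma (real k + 3/2)" by (rule Gamma_plus1[OF nz])
  moreover have "real (Suc k) + 3/2 = real k + 3/2 + 1" by simp
  ultimately have "Gamma (real (Suc k) + 3/2) = (real k + 3/2) * Gamma (real k + 3/2)" by simp
  also have "\<dots> = (real k + 3/2) * (sqrt pi * fact (2*k+1) / (2^(2*k+1) * fact k))" by (simp only: Suc.IH)
  also have "\<dots> = sqrt pi * ((2*real k+3)*(2*real k+2)*fact (2*k+1)) / ((4*2^(2*k+1)) * ((real k+1) * fact k))"
  proof -
    have p: "real k + 1 \<noteq> 0" "(2::real)^(2*k+1) \<noteq> 0" "(fact k :: real) \<noteq> 0" by simp_all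
    show ?thesis by (rule gstep[OF p])
  qed
  also have "\<dots> = sqrt pi * fact (2*Suc k+1) / (2^(2*Suc k+1) * fact (Suc k))"
  proof -
    have a: "fact (Suc (Suc m)) = (real m + 2) * (real m + 1) * fact m" for m
      by (simp add: algebra_simps)
    have b: "2*Suc k+1 = Suc (Suc (2*k+1))" by simp
    have c: "(2::real)^(2*Suc k+1) = 4*2^(2*k+1)" by (simp add: power_add)
    show ?thesis unfolding c b a by (simp add: algebra_simps)
  qed
  finally show ?case .
qed

lemma pinz: "(complex_of_real pi) \<noteq> 0" by simp

lemma sqpi: "complex_of_real (sqrt pi) * complex_of_real (sqrt pi) = complex_of_real pi"
proof -
  have "sqrt pi * sqrt pi = pi" using pi_ge_zero by simp
  then show ?thesis by (metis of_real_mult)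
qed

lemma evM0: "complex_of_real pi * struveL0 y = eval_fps M0f y"
proof -
  have "(\<lambda>k. fps_nth M0f (2*k+1) * y^(2*k+1)) sums eval_fps M0f y"
    apply (rule reidx[OF sm2 _ rM0]) apply (drule odd_range) by (simp add: M0f_def)
  then have s: "(\<lambda>k. fps_nth M0f (2*k+1) * y^(2*k+1) / complex_of_real pi) sums (eval_fps M0f y / complex_of_real pi)"
    by (rule sums_divide)
  have t: "fps_nth M0f (2*k+1) * y^(2*k+1) / complex_of_real pi =
      (y / 2) ^ (2 * k + 1) / (complex_of_real (Gamma (real k + 3 / 2)) * complex_of_real (Gamma (real k + 3 / 2)))" for k
  proof -
    have g: "complex_of_real (Gamma (real k + 3 / 2)) * complex_of_real (Gamma (real k + 3 / 2))
       = complex_of_real pi * (fact (2*k+1))^2 / (2^(2*k+1) * fact k)^2"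
      unfolding of_real_mult[symmetric] Gamma_half
      by (simp add: power2_eq_square field_simps sqpi del: fact_Suc)
    show ?thesis unfolding g using pinz
      by (simp add: M0f_def power_divide field_simps power2_eq_square del: fact_Suc)
  qed
  from s have "struveL0 y = eval_fps M0f y / complex_of_real pi"
    unfolding t struveL0_def by (simp add: sums_iff)
  then show ?thesis using pinz by simp
qed

lemma evM1: "complex_of_real pi * struveL1 y = eval_fps M1f y"
proof -
  have "(\<lambda>k. fps_nth M1f (2*k+2) * y^(2*k+2)) sums eval_fps M1f y"
    apply (rule reidx[OF sm3 _ rM1]) apply (drule even2_range) by (auto simp add: M1f_def)
  then have s: "(\<lambda>k. fps_nth M1f (2*k+2) * y^(2*k+2) / complex_of_real pi) sums (eval_fps M1f y / complex_of_real pi)"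
    by (rule sums_divide)
  have t: "fps_nth M1f (2*k+2) * y^(2*k+2) / complex_of_real pi =
      (y / 2) ^ (2 * k + 2) / (complex_of_real (Gamma (real k + 3 / 2)) * complex_of_real (Gamma (real k + 5 / 2)))" for k
  proof -
    have e5: "real k + 5/2 = real (Suc k) + 3/2" by simp
    have g: "complex_of_real (Gamma (real k + 3 / 2)) * complex_of_real (Gamma (real k + 5 / 2))
       = complex_of_real pi * fact (2*k+1) * fact (2*Suc k+1) / (2^(2*k+1) * fact k * (2^(2*Suc k+1) * fact (Suc k)))"
      unfolding of_real_mult[symmetric] e5 Gamma_half
      by (simp add: field_simps sqpi del: fact_Suc)
    have e: "(2*k+2) div 2 - 1 = k" "(2*k+2) div 2 = Suc k" "2*k+2-1 = 2*k+1" "2*k+2+1 = 2*Suc k+1" by simp_all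
    show ?thesis unfolding g using pinz
      unfolding M1f_def fps_nth_Abs_fps
      by (simp only: e if_True) (simp add: power_divide field_simps four_pow2 del: fact_Suc)
  qed
  from s have "struveL1 y = eval_fps M1f y / complex_of_real pi"
    unfolding t struveL1_def by (simp add: sums_iff)
  then show ?thesis using pinz by simp
qed


lemma rinf_add: "fps_conv_radius f = \<infinity> \<Longrightarrow> fps_conv_radius g = \<infinity> \<Longrightarrow> fps_conv_radius (f+g) = (\<infinity>::ereal)"
  for f g :: "complex fps"
  using fps_conv_radius_add[of f g] by simp
lemma rinf_diff: "fps_conv_radius f = \<infinity> \<Longrightarrow> fps_conv_radius g = \<infinity> \<Longrightarrow> fps_conv_radius (f-g) = (\<infinity>::ereal)"
  for f g :: "complex fps"
  using fps_conv_radius_diff[of f g] by simp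
lemma rinf_mult: "fps_conv_radius f = \<infinity> \<Longrightarrow> fps_conv_radius g = \<infinity> \<Longrightarrow> fps_conv_radius (f*g) = (\<infinity>::ereal)"
  for f g :: "complex fps"
  using fps_conv_radius_mult[of f g] by simp

lemma rG: "fps_conv_radius Gf = \<infinity>"
  unfolding Gf_def by (intro rinf_add rinf_diff rI0 rS) simp

lemma rA: "fps_conv_radius Af = \<infinity>"
  unfolding A_eq by (intro rinf_mult rG) simp

lemma evSsum: "(\<Sum>n. y ^ (2 * n + 1) / (4 ^ n * (of_nat (fact n))\<^sup>2 * of_nat (2 * n + 1))) = eval_fps Sf y"
  using evS[of y] by (simp add: sums_iff)

lemma evG: "eval_fps Gf y = 1 - besselI0 y + eval_fps Sf y"
proof -
  have "eval_fps Gf y = eval_fps (1 - I0f) y + eval_fps Sf y"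
    unfolding Gf_def by (rule eval_fps_add) (simp_all add: rinf_diff rI0 rS)
  also have "eval_fps (1 - I0f) y = 1 - eval_fps I0f y"
    by (subst eval_fps_diff) (simp_all add: rI0)
  finally show ?thesis by (simp add: evI0)
qed

lemma evA: "eval_fps Af y = exp y * eval_fps Gf y"
  unfolding A_eq by (subst eval_fps_mult) (simp_all add: rG)

lemma evT: "eval_fps Sf y = y * besselI0 y + 1/2 * (y * (besselI0 y * (complex_of_real pi * struveL1 y)
                 - besselI1 y * (complex_of_real pi * struveL0 y)))"
proof -
  have r: "fps_conv_radius (fps_X * I0f) = \<infinity>" "fps_conv_radius (I0f * M1f) = \<infinity>"
    "fps_conv_radius (I1f * M0f) = \<infinity>" "fps_conv_radius (I0f * M1f - I1f * M0f) = \<infinity>"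
    "fps_conv_radius (fps_X * (I0f * M1f - I1f * M0f)) = \<infinity>"
    by (intro rinf_mult rinf_diff rI0 rI1 rM0 rM1; simp)+
  have c: "fps_conv_radius (fps_const (1/2::complex)) = \<infinity>" by (rule fps_conv_radius_const)
  have r7: "fps_conv_radius (fps_const (1/2::complex) * (fps_X * (I0f * M1f - I1f * M0f))) = \<infinity>"
    by (rule rinf_mult[OF c r(5)])
  have "eval_fps Sf y = eval_fps Tf y" by (simp add: T_eq)
  also have "\<dots> = eval_fps (fps_X * I0f) y + eval_fps (fps_const (1/2) * (fps_X * (I0f * M1f - I1f * M0f))) y"
    unfolding Tf_def by (rule eval_fps_add) (simp_all add: r r7)
  also have "eval_fps (fps_X * I0f) y = y * eval_fps I0f y"
    by (subst eval_fps_mult) (simp_all add: rI0)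
  also have "eval_fps (fps_const (1/2) * (fps_X * (I0f * M1f - I1f * M0f))) y
      = 1/2 * (y * (eval_fps I0f y * eval_fps M1f y - eval_fps I1f y * eval_fps M0f y))"
    apply (subst eval_fps_mult, simp add: c, simp add: r)
    apply (subst eval_fps_mult, simp, simp add: r)
    apply (subst eval_fps_diff, simp add: r, simp add: r)
    apply (subst eval_fps_mult, simp add: rI0, simp add: rM1)
    apply (subst eval_fps_mult, simp add: rI1, simp add: rM0)
    by simp
  finally show ?thesis by (simp add: evI0 evI1 evM0 evM1)
qed

lemma cat_le: "catalan n \<le> 4^n"
proof -
  have "catalan n \<le> (2*n) choose n" unfolding catalan_def by (rule div_le_dividend)
  also have "\<dots> \<le> 2^(2*n)" by (rule binomial_le_pow2)
  also have "\<dots> = 4^n" by (simp add: power_mult)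
  finally show ?thesis .
qed

lemma ncc: "norm (cc n) \<le> 2^n"
proof -
  have "real (catalan n) \<le> real (4^n)" using cat_le by (rule of_nat_mono)
  then have c: "real (catalan n) \<le> 2^n * 2^n" by (simp add: power_mult_distrib[symmetric])
  have "norm (cc n) = real (catalan n) / 2^n" by (simp add: cc_def norm_divide norm_power)
  also have "\<dots> \<le> 2^n" using c by (simp add: divide_simps)
  finally show ?thesis .
qed

lemma geo2: "(\<Sum>n<N. (2::real)^n) \<le> 2^N"
  by (induction N) simp_all

lemma naa: "norm (aa N) \<le> 2^N"
proof -
  have "norm (aa N) \<le> (\<Sum>n<N. norm (cc n))" unfolding aa_def by (rule norm_sum)
  also have "\<dots> \<le> (\<Sum>n<N. (2::real)^n)" by (intro sum_mono ncc)
  also have "\<dots> \<le> 2^N" by (rule geo2)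
  finally show ?thesis .
qed

lemma partial:
  "(\<Sum>n<N. cc n * (e - (\<Sum>k\<le>n. t k))) = aa N * (e - (\<Sum>k<N. t k)) + (\<Sum>k<N. aa k * t k)"
proof (induction N)
  case 0 then show ?case by (simp add: aa_def)
next
  case (Suc N)
  have a: "aa (Suc N) = aa N + cc N" by (simp add: aa_def)
  have b: "(\<Sum>k\<le>N. t k) = (\<Sum>k<N. t k) + t N" by (simp add: lessThan_Suc_atMost[symmetric])
  show ?case using Suc.IH by (simp add: a b algebra_simps)
qed

lemma exp_sums: fixes y :: complex shows "(\<lambda>k. y^k / of_nat (fact k)) sums exp y"
proof -
  have "(\<lambda>n. fps_nth (fps_exp 1) n * y^n) sums eval_fps (fps_exp (1::complex)) y"
    by (rule sums_eval_fps) simp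
  then show ?thesis by simp
qed

lemma tail_bound:
  fixes y :: complex
  defines "u \<equiv> \<lambda>k. inverse (fact k) * (2 * norm y)^k"
  shows "norm (aa N * (exp y - (\<Sum>k<N. y^k / of_nat (fact k)))) \<le> (\<Sum>j. u (j + N))"
proof -
  define t where "t = (\<lambda>k. y^k / of_nat (fact k) :: complex)"
  have st: "summable t" using exp_sums[of y] unfolding t_def by (simp add: sums_iff)
  have et: "suminf t = exp y" using exp_sums[of y] unfolding t_def by (simp add: sums_iff)
  have eR: "exp y - (\<Sum>k<N. t k) = (\<Sum>j. t (j + N))"
    using suminf_minus_initial_segment[OF st, of N] et by simp
  have nt0: "summable (\<lambda>k. inverse (fact k) * norm y ^ k)" by (rule summable_exp)
  have ntk: "norm (t k) = inverse (fact k) * norm y ^ k" for k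
    by (simp add: t_def norm_divide norm_power field_simps)
  have nt: "summable (\<lambda>j. norm (t (j + N)))"
    unfolding ntk by (rule summable_ignore_initial_segment[OF nt0])
  have su: "summable (\<lambda>j. u (j + N))"
    unfolding u_def by (rule summable_ignore_initial_segment[OF summable_exp])
  have "norm (aa N * (exp y - (\<Sum>k<N. t k))) = norm (aa N) * norm (\<Sum>j. t (j + N))"
    by (simp add: eR norm_mult)
  also have "\<dots> \<le> 2^N * (\<Sum>j. norm (t (j + N)))"
    by (intro mult_mono naa summable_norm nt) simp_all
  also have "\<dots> = (\<Sum>j. 2^N * norm (t (j + N)))"
    by (rule suminf_mult[OF nt, symmetric])
  also have "\<dots> \<le> (\<Sum>j. u (j + N))"
  proof (rule suminf_le)
    fix j
    have "(2::real)^N \<le> 2^(j+N)" by (rule power_increasing) simp_all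
    then have "2^N * (inverse (fact (j+N)) * norm y ^ (j+N)) \<le> 2^(j+N) * (inverse (fact (j+N)) * norm y ^ (j+N))"
      by (rule mult_right_mono) simp
    then show "2^N * norm (t (j + N)) \<le> u (j + N)"
      unfolding ntk u_def by (simp add: power_mult_distrib algebra_simps)
  qed (intro summable_mult nt, rule su)
  finally show ?thesis unfolding t_def .
qed

lemma tail_zero:
  fixes y :: complex
  shows "(\<lambda>N. aa N * (exp y - (\<Sum>k<N. y^k / of_nat (fact k)))) \<longlonglongrightarrow> 0"
proof (rule Lim_null_comparison)
  define u where "u = (\<lambda>k. inverse (fact k) * (2 * norm y)^k)"
  show "\<forall>\<^sub>F N in sequentially. norm (aa N * (exp y - (\<Sum>k<N. y^k / of_nat (fact k)))) \<le> (\<Sum>j. u (j + N))"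
    unfolding u_def by (intro always_eventually allI tail_bound)
  have su: "summable u" unfolding u_def by (rule summable_exp)
  have "(\<lambda>N. suminf u - (\<Sum>i<N. u i)) \<longlonglongrightarrow> suminf u - suminf u"
    by (intro tendsto_diff tendsto_const summable_LIMSEQ su)
  then show "(\<lambda>N. \<Sum>j. u (j + N)) \<longlonglongrightarrow> 0"
    by (simp add: suminf_minus_initial_segment[OF su])
qed

theorem mainTheorem15:
  fixes y :: complex
  shows "summable (\<lambda>n. y ^ (2 * n + 1) / (4 ^ n * (of_nat (fact n))\<^sup>2 * of_nat (2 * n + 1)))
    \<and> (\<lambda>n. of_nat (catalan n) / 2 ^ n * expRem n y) sums
        (exp y * (1 - besselI0 y +
           (\<Sum>n. y ^ (2 * n + 1) / (4 ^ n * (of_nat (fact n))\<^sup>2 * of_nat (2 * n + 1)))))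
    \<and> exp y * (1 - besselI0 y +
           (\<Sum>n. y ^ (2 * n + 1) / (4 ^ n * (of_nat (fact n))\<^sup>2 * of_nat (2 * n + 1))))
      = exp y * (1 + (y - 1) * besselI0 y +
           of_real pi * y / 2 * (besselI0 y * struveL1 y - besselI1 y * struveL0 y))"
proof (intro conjI)
  show "summable (\<lambda>n. y ^ (2 * n + 1) / (4 ^ n * (of_nat (fact n))\<^sup>2 * of_nat (2 * n + 1)))"
    using evS[of y] by (simp add: sums_iff)
next
  have sA: "(\<lambda>k. aa k * (y^k / of_nat (fact k))) sums eval_fps Af y"
  proof -
    have "(\<lambda>k. fps_nth Af k * y^k) sums eval_fps Af y" by (rule sums_eval_fps) (simp add: rA)
    then show ?thesis by (simp add: Af_def)
  qed
  have lim: "(\<lambda>N. aa N * (exp y - (\<Sum>k<N. y^k / of_nat (fact k))) + (\<Sum>k<N. aa k * (y^k / of_nat (fact k))))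
      \<longlonglongrightarrow> 0 + eval_fps Af y"
    by (intro tendsto_add tail_zero) (use sA in \<open>simp add: sums_def\<close>)
  have eq: "(\<Sum>n<N. of_nat (catalan n) / 2 ^ n * expRem n y)
      = aa N * (exp y - (\<Sum>k<N. y^k / of_nat (fact k))) + (\<Sum>k<N. aa k * (y^k / of_nat (fact k)))" for N
    unfolding expRem_def cc_def[symmetric] by (rule partial)
  have "(\<lambda>n. of_nat (catalan n) / 2 ^ n * expRem n y) sums eval_fps Af y"
    unfolding sums_def eq using lim by simp
  then show "(\<lambda>n. of_nat (catalan n) / 2 ^ n * expRem n y) sums
        (exp y * (1 - besselI0 y +
           (\<Sum>n. y ^ (2 * n + 1) / (4 ^ n * (of_nat (fact n))\<^sup>2 * of_nat (2 * n + 1)))))"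
    unfolding evSsum by (simp add: evA evG)
next
  show "exp y * (1 - besselI0 y +
           (\<Sum>n. y ^ (2 * n + 1) / (4 ^ n * (of_nat (fact n))\<^sup>2 * of_nat (2 * n + 1))))
      = exp y * (1 + (y - 1) * besselI0 y +
           of_real pi * y / 2 * (besselI0 y * struveL1 y - besselI1 y * struveL0 y))"
    unfolding evSsum evT by (simp add: algebra_simps)
qed

end
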